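(* Let $(X,d)$ be a compact metric space and let $f:X\to X$ be a homeomorphism. If $f$ possesses a wandering point, then ${\rm h_{pol}}(f)\ge1$.
   Context: A point $x$ is wandering for $f$ if there is a neighborhood $U$ of $x$ with $f^k(U)\cap U=\emptyset$ for all $k\ge1$. Polynomial entropy: with $d_n^f(x,y)=\max_{0\le k\le n-1}d(f^k(x),f^k(y))$ and $G_n^f(\varepsilon)$ the minimal number of $d_n^f$-balls of radius $\varepsilon$ covering $X$, ${\rm h_{pol}}(f)=\lim_{\varepsilon\to0}\limsup_{n\to\infty}\frac{\log G_n^f(\varepsilon)}{\log n}$. *)

theory Defs
  imports "HOL-Analysis.Analysis"
begin

definition bowen_dist :: "('a::metric_space \<Rightarrow> 'a) \<Rightarrow> nat \<Rightarrow> 'a \<Rightarrow> 'a \<Rightarrow> real" where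
  "bowen_dist f n x y = Max ((\<lambda>k. dist ((f ^^ k) x) ((f ^^ k) y)) ` {..<n})"

definition cover_num :: "'a::metric_space set \<Rightarrow> ('a \<Rightarrow> 'a) \<Rightarrow> nat \<Rightarrow> real \<Rightarrow> nat" where
  "cover_num X f n e = Inf {card C | C. finite C \<and> C \<subseteq> X \<and>
      X \<subseteq> (\<Union>c\<in>C. {y. bowen_dist f n c y < e})}"

definition hpol :: "'a::metric_space set \<Rightarrow> ('a \<Rightarrow> 'a) \<Rightarrow> ereal" where
  "hpol X f = Lim (at_right (0::real))
     (\<lambda>e. limsup (\<lambda>n. ereal (ln (real (cover_num X f n e)) / ln (real n))))"

definition wandering_point :: "'a::metric_space set \<Rightarrow> ('a \<Rightarrow> 'a) \<Rightarrow> 'a \<Rightarrow> bool" where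
  "wandering_point X f x \<longleftrightarrow> x \<in> X \<and> (\<exists>U. U \<subseteq> X \<and>
      (\<exists>V. openin (top_of_set X) V \<and> x \<in> V \<and> V \<subseteq> U) \<and>
      (\<forall>k\<ge>1. (f ^^ k) ` U \<inter> U = {}))"

end

theory Submission
  imports Defs
begin

lemma funpow_cont:
  assumes "continuous_on X f" "f ` X \<subseteq> X"
  shows "continuous_on X (f ^^ k) \<and> (f ^^ k) ` X \<subseteq> X"
proof (induction k)
  case 0 then show ?case by (simp add: continuous_on_id)
next
  case (Suc k)
  then have c: "continuous_on X (f ^^ k)" and s: "(f ^^ k) ` X \<subseteq> X" by auto
  have "continuous_on X (f \<circ> (f ^^ k))"
    by (rule continuous_on_compose[OF c continuous_on_subset[OF assms(1) s]])
  moreover have "(f \<circ> (f ^^ k)) ` X \<subseteq> X" using s assms(2) by auto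
  ultimately show ?case by simp
qed

lemma bowen_Suc:
  assumes "n \<ge> 1"
  shows "bowen_dist f (Suc n) c y = max (dist ((f ^^ n) c) ((f ^^ n) y)) (bowen_dist f n c y)"
proof -
  have "{..<Suc n} = insert n {..<n}" by auto
  then show ?thesis unfolding bowen_dist_def using assms
    by (simp add: Max_insert lessThan_empty_iff)
qed

lemma bowen_cont:
  assumes "continuous_on X f" "f ` X \<subseteq> X" "n \<ge> 1"
  shows "continuous_on X (bowen_dist f n c)"
  using assms(3)
proof (induction n rule: dec_induct)
  case base
  have "bowen_dist f 1 c = (\<lambda>y. dist c y)"
    by (rule ext) (simp add: bowen_dist_def lessThan_Suc)
  then show ?case by (simp add: continuous_on_dist continuous_on_const continuous_on_id)
next
  case (step m)
  have "bowen_dist f (Suc m) c = (\<lambda>y. max (dist ((f ^^ m) c) ((f ^^ m) y)) (bowen_dist f m c y))"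
    using bowen_Suc step(1) by blast
  moreover have "continuous_on X (f ^^ m)" using funpow_cont[OF assms(1,2)] by blast
  ultimately show ?case using step(3)
    by (auto intro!: continuous_on_max continuous_on_dist continuous_on_const)
qed

lemma bowen_ge:
  assumes "k < n"
  shows "dist ((f ^^ k) a) ((f ^^ k) b) \<le> bowen_dist f n a b"
  unfolding bowen_dist_def using assms by (intro Max_ge) (auto simp: lessThan_empty_iff)

lemma bowen_tri:
  assumes "n \<ge> 1"
  shows "bowen_dist f n a b \<le> bowen_dist f n a c + bowen_dist f n c b"
proof -
  have "bowen_dist f n a b \<in> (\<lambda>k. dist ((f ^^ k) a) ((f ^^ k) b)) ` {..<n}"
    unfolding bowen_dist_def using assms by (intro Max_in) (auto simp: lessThan_empty_iff)
  then obtain k where k: "k < n" "bowen_dist f n a b = dist ((f ^^ k) a) ((f ^^ k) b)" by auto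
  have "dist ((f ^^ k) a) ((f ^^ k) b) \<le> dist ((f ^^ k) a) ((f ^^ k) c) + dist ((f ^^ k) c) ((f ^^ k) b)"
    by (rule dist_triangle)
  also have "\<dots> \<le> bowen_dist f n a c + bowen_dist f n c b"
    using bowen_ge[OF k(1)] by (intro add_mono) auto
  finally show ?thesis using k by simp
qed

lemma bowen_sym: "bowen_dist f n a b = bowen_dist f n b a"
  unfolding bowen_dist_def by (simp add: dist_commute)

lemma cover_exists:
  assumes "compact X" "continuous_on X f" "f ` X \<subseteq> X" "n \<ge> 1" "e > 0"
  shows "\<exists>C. finite C \<and> C \<subseteq> X \<and> X \<subseteq> (\<Union>c\<in>C. {y. bowen_dist f n c y < e})"
proof -
  let ?B = "\<lambda>c. X \<inter> bowen_dist f n c -` {..<e}"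
  have op: "\<forall>T\<in>?B ` X. openin (top_of_set X) T"
    using bowen_cont[OF assms(2,3,4)] by (auto intro!: continuous_openin_preimage_gen)
  have cv: "X \<subseteq> \<Union>(?B ` X)"
  proof
    fix y assume "y \<in> X"
    have "bowen_dist f n y y = 0"
      unfolding bowen_dist_def using assms(4) by (simp add: image_constant_conv lessThan_empty_iff)
    then have "y \<in> ?B y" using \<open>y \<in> X\<close> assms(5) by auto
    then show "y \<in> \<Union>(?B ` X)" using \<open>y \<in> X\<close> by blast
  qed
  obtain D where D: "D \<subseteq> ?B ` X" "finite D" "X \<subseteq> \<Union>D"
    using assms(1) op cv unfolding compact_eq_openin_cover by meson
  then obtain C where C: "C \<subseteq> X" "finite C" "D = ?B ` C"
    by (meson finite_subset_image)
  show ?thesis using C D by (intro exI[of _ C]) auto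
qed

lemma fg_iter:
  assumes "\<forall>y\<in>X. g y \<in> X \<and> f (g y) = y" "x \<in> X"
  shows "(g ^^ i) x \<in> X \<and> (f ^^ i) ((g ^^ i) x) = x"
proof (induction i)
  case 0 then show ?case using assms by simp
next
  case (Suc i)
  have g: "(g ^^ Suc i) x = g ((g ^^ i) x)" by simp
  have f: "(f ^^ Suc i) y = (f ^^ i) (f y)" for y by (simp add: funpow_Suc_right del: funpow.simps)
  show ?case unfolding g f using Suc assms(1) by simp
qed

lemma fg_iter2:
  assumes "\<forall>y\<in>X. g y \<in> X \<and> f (g y) = y" "x \<in> X" "i \<le> j"
  shows "(f ^^ j) ((g ^^ i) x) = (f ^^ (j - i)) x"
proof -
  have "f ^^ j = f ^^ (j - i) \<circ> f ^^ i" using assms(3) by (simp add: funpow_add[symmetric])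
  then show ?thesis using fg_iter[OF assms(1,2)] by simp
qed

theorem proposition2p1:
  fixes X :: "'a::metric_space set" and f :: "'a \<Rightarrow> 'a"
  assumes "compact X"
    and "\<exists>g. homeomorphism X X f g"
    and "\<exists>x. wandering_point X f x"
  shows "hpol X f \<ge> 1"
proof -
  obtain g where hom: "homeomorphism X X f g" using assms(2) by blast
  have fc: "continuous_on X f" and fX: "f ` X \<subseteq> X" and gX: "\<forall>y\<in>X. g y \<in> X \<and> f (g y) = y"
    using hom unfolding homeomorphism_def by auto
  obtain x U V where x: "x \<in> X" "U \<subseteq> X" "openin (top_of_set X) V" "x \<in> V" "V \<subseteq> U"
    and wd: "\<forall>k\<ge>1. (f ^^ k) ` U \<inter> U = {}"
    using assms(3) unfolding wandering_point_def by blast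
  obtain r where r: "r > 0" "ball x r \<inter> X \<subseteq> V"
    using x(3,4) unfolding openin_contains_ball by blast
  define L where "L = (\<lambda>e. limsup (\<lambda>n. ereal (ln (real (cover_num X f n e)) / ln (real n))))"
  define CS where "CS = (\<lambda>n e. {card C | C. finite C \<and> C \<subseteq> X \<and>
      X \<subseteq> (\<Union>c\<in>C. {y. bowen_dist f n c y < e})})"
  have cn: "cover_num X f n e = Inf (CS n e)" for n e unfolding cover_num_def CS_def by simp
  have ne: "CS n e \<noteq> {}" if "n \<ge> 1" "e > 0" for n e
    using cover_exists[OF assms(1) fc fX that] unfolding CS_def by blast
  have cmono: "cover_num X f n e' \<le> cover_num X f n e" if "n \<ge> 1" "0 < e" "e \<le> e'" for n e e'
  proof -
    have sub: "CS n e \<subseteq> CS n e'"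
    proof
      fix k assume "k \<in> CS n e"
      then obtain C where C: "k = card C" "finite C" "C \<subseteq> X"
        "X \<subseteq> (\<Union>c\<in>C. {y. bowen_dist f n c y < e})" unfolding CS_def by blast
      have "X \<subseteq> (\<Union>c\<in>C. {y. bowen_dist f n c y < e'})"
      proof
        fix y assume "y \<in> X"
        then obtain c where "c \<in> C" "bowen_dist f n c y < e" using C(4) by blast
        then show "y \<in> (\<Union>c\<in>C. {y. bowen_dist f n c y < e'})" using that(3) by force
      qed
      then show "k \<in> CS n e'" unfolding CS_def using C by blast
    qed
    have bb: "bdd_below (CS n e')" by (rule bdd_belowI[of _ 0]) simp
    show ?thesis unfolding cn by (rule cInf_superset_mono[OF ne[OF that(1,2)] bb sub])
  qed
  have Lmono: "L e' \<le> L e" if "0 < e" "e \<le> e'" for e e'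
    unfolding L_def
  proof (intro Limsup_mono eventually_sequentiallyI[of 1])
    fix n :: nat assume n: "n \<ge> 1"
    have a: "cover_num X f n e' \<le> cover_num X f n e" using cmono[OF n that] .
    have "ln (real (cover_num X f n e')) \<le> ln (real (cover_num X f n e))"
    proof (cases "cover_num X f n e' = 0")
      case True then show ?thesis by (cases "cover_num X f n e") (auto simp: ln_ge_zero_iff)
    next
      case False then show ?thesis using a by simp
    qed
    moreover have "ln (real n) \<ge> 0" using n by simp
    ultimately show "ereal (ln (real (cover_num X f n e')) / ln (real n))
        \<le> ereal (ln (real (cover_num X f n e)) / ln (real n))"
      by (simp add: divide_right_mono)
  qed
  have lb: "cover_num X f n e \<ge> n" if n: "n \<ge> 1" and e: "0 < e" "e \<le> r / 2" for n e
  proof -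
    have "k \<ge> n" if "k \<in> CS n e" for k
    proof -
      obtain C where C: "k = card C" "finite C" "C \<subseteq> X"
        "X \<subseteq> (\<Union>c\<in>C. {y. bowen_dist f n c y < e})"
        using \<open>k \<in> CS n e\<close> unfolding CS_def by blast
      have zX: "(g ^^ j) x \<in> X" for j using fg_iter[OF gX x(1)] by blast
      have "\<forall>j. \<exists>c. c \<in> C \<and> bowen_dist f n c ((g ^^ j) x) < e" using C(4) zX by blast
      then obtain c where cc: "\<forall>j. c j \<in> C \<and> bowen_dist f n (c j) ((g ^^ j) x) < e"
        using choice[of "\<lambda>j c. c \<in> C \<and> bowen_dist f n c ((g ^^ j) x) < e"] by blast
      have c: "\<And>j. c j \<in> C" "\<And>j. bowen_dist f n (c j) ((g ^^ j) x) < e" using cc by auto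
      have sep: "bowen_dist f n ((g ^^ i) x) ((g ^^ j) x) \<ge> r" if ij: "i < j" "j < n" for i j
      proof -
        have e1: "(f ^^ j) ((g ^^ i) x) = (f ^^ (j - i)) x" using fg_iter2[OF gX x(1)] ij by simp
        have e2: "(f ^^ j) ((g ^^ j) x) = x" using fg_iter[OF gX x(1)] by blast
        have xU: "x \<in> U" using x(4,5) by blast
        have "j - i \<ge> 1" using ij by simp
        then have "(f ^^ (j - i)) ` U \<inter> U = {}" using wd by blast
        then have nU: "(f ^^ (j - i)) x \<notin> U" using xU by blast
        have inX: "(f ^^ (j - i)) x \<in> X" using funpow_cont[OF fc fX] x(1) by blast
        have "(f ^^ (j - i)) x \<notin> ball x r" using nU inX r(2) x(5) by blast
        then have "r \<le> dist x ((f ^^ (j - i)) x)" by (simp add: not_less)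
        then have "dist ((f ^^ j) ((g ^^ i) x)) ((f ^^ j) ((g ^^ j) x)) \<ge> r"
          unfolding e1 e2 by (simp add: dist_commute)
        then show ?thesis using bowen_ge[OF ij(2), of f "(g ^^ i) x" "(g ^^ j) x"] by linarith
      qed
      have "inj_on c {..<n}"
      proof (rule inj_onI, rule ccontr)
        fix i j assume ij: "i \<in> {..<n}" "j \<in> {..<n}" "c i = c j" "i \<noteq> j"
        have *: "\<And>i j. i < j \<Longrightarrow> j < n \<Longrightarrow> c i = c j \<Longrightarrow> False"
        proof -
          fix i j assume a: "i < j" "j < n" "c i = c j"
          have "bowen_dist f n ((g ^^ i) x) ((g ^^ j) x)
              \<le> bowen_dist f n ((g ^^ i) x) (c i) + bowen_dist f n (c i) ((g ^^ j) x)"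
            using bowen_tri[OF n] .
          also have "\<dots> < e + e" using c(2)[of i] c(2)[of j] a(3)
            by (simp add: bowen_sym[of f n "(g ^^ i) x"])
          finally show False using sep[OF a(1,2)] e by simp
        qed
        show False
        proof (cases "i < j")
          case True then show False using * ij by auto
        next
          case False then have "j < i" using ij(4) by simp
          then show False using *[of j i] ij by auto
        qed
      qed
      then have "card (c ` {..<n}) = n" by (simp add: card_image)
      moreover have "c ` {..<n} \<subseteq> C" using c(1) by auto
      ultimately show ?thesis using C(1,2) by (metis card_mono)
    qed
    then show ?thesis unfolding cn using ne[OF n e(1)] by (intro cInf_greatest) auto
  qed
  have L1: "L e \<ge> 1" if e: "0 < e" "e \<le> r / 2" for e
    unfolding L_def
  proof (intro le_Limsup eventually_sequentiallyI[of 2])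
    show "sequentially \<noteq> bot" by simp
    fix n :: nat assume n: "n \<ge> 2"
    have "real n \<le> real (cover_num X f n e)" using lb[OF _ e] n by simp
    then have "ln (real n) \<le> ln (real (cover_num X f n e))" using n by simp
    moreover have "ln (real n) > 0" using n by simp
    ultimately show "1 \<le> ereal (ln (real (cover_num X f n e)) / ln (real n))"
      by simp
  qed
  define S where "S = (SUP e\<in>{0<..}. L e)"
  have lim: "(L \<longlongrightarrow> S) (at_right 0)"
  proof (rule order_tendstoI)
    fix a assume "a < S"
    then obtain e0 where e0: "e0 \<in> {0<..}" "a < L e0" unfolding S_def by (meson less_SUP_iff)
    show "\<forall>\<^sub>F e in at_right 0. a < L e"
      unfolding eventually_at_right_field
      using e0 Lmono by (intro exI[of _ e0]) (auto intro: less_le_trans)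
  next
    fix a assume "S < a"
    show "\<forall>\<^sub>F e in at_right 0. L e < a"
      unfolding eventually_at_right_field
    proof (intro exI[of _ 1] conjI allI impI)
      fix y :: real assume "0 < y"
      then have "L y \<le> S" unfolding S_def by (auto intro: SUP_upper)
      then show "L y < a" using \<open>S < a\<close> by simp
    qed simp
  qed
  have "hpol X f = S" unfolding hpol_def L_def[symmetric]
    using lim by (intro tendsto_Lim) auto
  moreover have "L (r/2) \<le> S" unfolding S_def using r by (auto intro: SUP_upper)
  moreover have "1 \<le> L (r/2)" using L1 r by simp
  ultimately show ?thesis by simp
qed

end
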